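(* Assume $F$ is $K$-smooth with $\ell\in\mathrm{int}(K)$ and strongly $K$-convex with $\mu\in\mathrm{int}(K)$, let $e\in\mathrm{int}(K)$, $\gamma\in(0,1)$, and let $\{x^k\}$ be generated by Algorithm 5, assumed not to terminate ($d^k\neq0$ for all $k$). Let $L_{\max}:=\max_{c^*\in C_e}\langle c^*,\ell\rangle$, $t_{\min}:=\min\{\gamma/L_{\max},1\}$, $\mu_{\min}:=\min_{c^*\in C_e}\langle c^*,\mu\rangle$. Then: (i) $\{x^k\}$ converges to an efficient solution $x^*$ of $\min_K F(x)$; (ii) $\|x^{k+1}-x^*\|\le\sqrt{1-t_{\min}\mu_{\min}}\,\|x^k-x^*\|$ for all $k\ge0$.
   Context: $K\subset\mathbb{R}^m$ closed convex pointed cone with nonempty interior; $y\preceq_K y'$ iff $y'-y\in K$. $K^*=\{c:\langle c,y\rangle\ge0\ \forall y\in K\}$; $C_e:=\{c^*\in K^*:\langle c^*,e\rangle=1\}$. $F:\mathbb{R}^n\to\mathbb{R}^m$ differentiable with Jacobian $JF$. Strongly $K$-convex with $\mu$: $JF(x)(y-x)+\tfrac12\|y-x\|^2\mu\preceq_K F(y)-F(x)$ $\forall x,y$; $K$-smooth with $\ell$: $F(y)-F(x)\preceq_K JF(x)(y-x)+\tfrac12\|y-x\|^2\ell$ $\forall x,y$. Efficient: no $x$ with $F(x)\preceq_K F(x^* )$, $F(x)\neq F(x^* )$. Algorithm 5: given $x^0$, for $k=0,1,\dots$: $d^k:=\arg\min_{d}\max_{c^*\in C_e}\langle c^*,JF(x^k)d\rangle+\tfrac12\|d\|^2$;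 if $d^k=0$ stop; otherwise $t_k:=\max\{\gamma^j:j\in\mathbb{N},\ F(x^k+\gamma^jd^k)-F(x^k)\preceq_K\gamma^j(JF(x^k)d^k+\tfrac12\|d^k\|^2e)\}$ and $x^{k+1}:=x^k+t_kd^k$. *)

theory Defs
  imports "HOL-Analysis.Analysis"
begin

definition K_le :: "'b::real_vector set \<Rightarrow> 'b \<Rightarrow> 'b \<Rightarrow> bool" where
  "K_le K y y' \<longleftrightarrow> y' - y \<in> K"

definition dual_cone :: "'b::real_inner set \<Rightarrow> 'b set" where
  "dual_cone K = {c. \<forall>y\<in>K. 0 \<le> c \<bullet> y}"

definition Ce :: "'b::real_inner set \<Rightarrow> 'b \<Rightarrow> 'b set" where
  "Ce K e = {c \<in> dual_cone K. c \<bullet> e = 1}"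

definition proper_cone :: "'b::euclidean_space set \<Rightarrow> bool" where
  "proper_cone K \<longleftrightarrow> cone K \<and> convex K \<and> closed K \<and> K \<inter> uminus ` K = {0} \<and> interior K \<noteq> {}"

definition strongly_K_convex :: "'b::euclidean_space set \<Rightarrow> ('a::euclidean_space \<Rightarrow> 'b) \<Rightarrow> ('a \<Rightarrow> 'a \<Rightarrow> 'b) \<Rightarrow> 'b \<Rightarrow> bool" where
  "strongly_K_convex K F J \<mu> \<longleftrightarrow>
     (\<forall>x y. K_le K (J x (y - x) + (1/2 * (norm (y - x))\<^sup>2) *\<^sub>R \<mu>) (F y - F x))"

definition K_smooth :: "'b::euclidean_space set \<Rightarrow> ('a::euclidean_space \<Rightarrow> 'b) \<Rightarrow> ('a \<Rightarrow> 'a \<Rightarrow> 'b) \<Rightarrow> 'b \<Rightarrow> bool" where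
  "K_smooth K F J l \<longleftrightarrow>
     (\<forall>x y. K_le K (F y - F x) (J x (y - x) + (1/2 * (norm (y - x))\<^sup>2) *\<^sub>R l))"

definition K_efficient :: "'b::euclidean_space set \<Rightarrow> ('a \<Rightarrow> 'b) \<Rightarrow> 'a \<Rightarrow> bool" where
  "K_efficient K F xs \<longleftrightarrow> \<not> (\<exists>x. K_le K (F x) (F xs) \<and> F x \<noteq> F xs)"

text \<open>Objective of the direction subproblem: max_{c \<in> C_e} <c, JF(x) d> + 1/2 |d|^2
  (the max is written as a supremum; C_e is compact and nonempty).\<close>
definition dir_obj :: "'b::euclidean_space set \<Rightarrow> 'b \<Rightarrow> ('a::euclidean_space \<Rightarrow> 'b) \<Rightarrow> 'a \<Rightarrow> real" where
  "dir_obj K e Jx d = (SUP c\<in>Ce K e. c \<bullet> Jx d) + 1/2 * (norm d)\<^sup>2"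

definition armijo_ok :: "'b::euclidean_space set \<Rightarrow> 'b \<Rightarrow> ('a::euclidean_space \<Rightarrow> 'b) \<Rightarrow> ('a \<Rightarrow> 'b) \<Rightarrow> real \<Rightarrow> 'a \<Rightarrow> 'a \<Rightarrow> nat \<Rightarrow> bool" where
  "armijo_ok K e F Jx \<gamma> x d j \<longleftrightarrow>
     K_le K (F (x + (\<gamma>^j) *\<^sub>R d) - F x) ((\<gamma>^j) *\<^sub>R (Jx d + (1/2 * (norm d)\<^sup>2) *\<^sub>R e))"

end

theory Submission
  imports Defs
begin

lemma pc_add: assumes "proper_cone K" "a \<in> K" "b \<in> K" shows "a + b \<in> K"
proof -
  have cv: "convex K" and cn: "cone K" using assms(1) unfolding proper_cone_def by auto
  have "(1/2) *\<^sub>R a + (1/2) *\<^sub>R b \<in> K" using cv assms(2,3) unfolding convex_def by auto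
  then have "2 *\<^sub>R ((1/2) *\<^sub>R a + (1/2) *\<^sub>R b) \<in> K" using cn unfolding cone_def by auto
  then show ?thesis by (simp add: scaleR_add_right)
qed

lemma pc_scale: assumes "proper_cone K" "a \<in> K" "0 \<le> c" shows "c *\<^sub>R a \<in> K"
  using assms unfolding proper_cone_def cone_def by auto

lemma pc_zero: assumes "proper_cone K" shows "0 \<in> K"
  using assms unfolding proper_cone_def by auto

lemma pc_sep: assumes "proper_cone K" "z \<notin> K"
  shows "\<exists>a. (\<forall>y\<in>K. 0 \<le> a \<bullet> y) \<and> a \<bullet> z < 0"
proof -
  have cv: "convex K" and cl: "closed K" using assms(1) unfolding proper_cone_def by auto
  obtain a b where ab: "a \<bullet> z < b" "\<forall>x\<in>K. b < a \<bullet> x"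
    using separating_hyperplane_closed_point[OF cv cl assms(2)] by blast
  have b0: "b < 0" using ab(2) pc_zero[OF assms(1)] by auto
  have "0 \<le> a \<bullet> y" if y: "y \<in> K" for y
  proof (rule ccontr)
    assume "\<not> 0 \<le> a \<bullet> y"
    then have neg: "a \<bullet> y < 0" by simp
    define c where "c = b / (a \<bullet> y)"
    have c0: "0 \<le> c" unfolding c_def using neg b0 by (simp add: divide_nonpos_neg)
    have "c *\<^sub>R y \<in> K" using pc_scale[OF assms(1) y c0] .
    then have "b < a \<bullet> (c *\<^sub>R y)" using ab(2) by auto
    also have "a \<bullet> (c *\<^sub>R y) = b" unfolding c_def using neg by simp
    finally show False by simp
  qed
  then show ?thesis using ab b0 by (intro exI[of _ a]) auto
qed

lemma dual_int: assumes "e \<in> interior K"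
  shows "\<exists>r>0. \<forall>c\<in>dual_cone K. r * norm c \<le> c \<bullet> e"
proof -
  obtain r where r: "r > 0" "cball e r \<subseteq> K" using assms mem_interior_cball by blast
  have "r * norm c \<le> c \<bullet> e" if c: "c \<in> dual_cone K" for c
  proof (cases "c = 0")
    case True then show ?thesis by simp
  next
    case False
    let ?y = "e - (r / norm c) *\<^sub>R c"
    have "dist e ?y = r" using False r(1) by (simp add: dist_norm)
    then have "?y \<in> K" using r(2) by auto
    then have "0 \<le> c \<bullet> ?y" using c unfolding dual_cone_def by auto
    also have "c \<bullet> ?y = c \<bullet> e - r * norm c" using False
      by (simp add: inner_diff_right power2_norm_eq_inner[symmetric] power2_eq_square)
    finally show ?thesis by simp
  qed
  then show ?thesis using r by blast
qed

lemma dual_pos: assumes "e \<in> interior K" "c \<in> dual_cone K" "c \<noteq> 0" shows "0 < c \<bullet> e"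
proof -
  obtain r where "r > 0" "\<forall>c\<in>dual_cone K. r * norm c \<le> c \<bullet> e" using dual_int[OF assms(1)] by blast
  then have "r * norm c \<le> c \<bullet> e" using assms(2) by auto
  moreover have "0 < r * norm c" using \<open>r>0\<close> assms(3) by simp
  ultimately show ?thesis by simp
qed

lemma bipolar: assumes "proper_cone K" "e \<in> interior K" "\<And>c. c \<in> Ce K e \<Longrightarrow> 0 \<le> c \<bullet> z"
  shows "z \<in> K"
proof (rule ccontr)
  assume "z \<notin> K"
  then obtain a where a: "\<forall>y\<in>K. 0 \<le> a \<bullet> y" "a \<bullet> z < 0" using pc_sep[OF assms(1)] by blast
  have ad: "a \<in> dual_cone K" using a(1) unfolding dual_cone_def by auto
  have "a \<noteq> 0" using a(2) by auto
  then have ae: "0 < a \<bullet> e" using dual_pos[OF assms(2) ad] by simp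
  have "(1 / (a \<bullet> e)) *\<^sub>R a \<in> Ce K e" using ad ae unfolding Ce_def dual_cone_def by auto
  then have "0 \<le> ((1 / (a \<bullet> e)) *\<^sub>R a) \<bullet> z" using assms(3) by blast
  then have "0 \<le> a \<bullet> z / (a \<bullet> e)" by simp
  then have "0 \<le> a \<bullet> z" using ae by (simp add: zero_le_divide_iff)
  then show False using a(2) by simp
qed

lemma Ce_ne: assumes "proper_cone K" "e \<in> interior K" shows "Ce K e \<noteq> {}"
proof -
  obtain v :: 'a where v: "v \<in> Basis" using nonempty_Basis by blast
  then have v0: "v \<noteq> 0" by auto
  have "\<exists>z. z \<notin> K"
  proof (rule ccontr)
    assume "\<not> (\<exists>z. z \<notin> K)"
    then have "v \<in> K \<inter> uminus ` K" by (auto intro: image_eqI[of _ _ "-v"])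
    then show False using assms(1) v0 unfolding proper_cone_def by auto
  qed
  then obtain z where "z \<notin> K" by blast
  then obtain a where a: "\<forall>y\<in>K. 0 \<le> a \<bullet> y" "a \<bullet> z < 0" using pc_sep[OF assms(1)] by blast
  have ad: "a \<in> dual_cone K" using a(1) unfolding dual_cone_def by auto
  have "a \<noteq> 0" using a(2) by auto
  then have ae: "0 < a \<bullet> e" using dual_pos[OF assms(2) ad] by simp
  have "(1 / (a \<bullet> e)) *\<^sub>R a \<in> Ce K e" using ad ae unfolding Ce_def dual_cone_def by auto
  then show ?thesis by blast
qed

lemma Ce_bdd: assumes "e \<in> interior K" shows "\<exists>B. \<forall>c\<in>Ce K e. norm c \<le> B"
proof -
  obtain r where r: "r > 0" "\<forall>c\<in>dual_cone K. r * norm c \<le> c \<bullet> e" using dual_int[OF assms(1)] by blast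
  have "norm c \<le> 1 / r" if "c \<in> Ce K e" for c
    using r that unfolding Ce_def by (auto simp: field_simps)
  then show ?thesis by blast
qed

lemma Ce_bddA: assumes "e \<in> interior K" shows "bdd_above ((\<lambda>c. c \<bullet> w) ` Ce K e)"
proof -
  obtain B where B: "\<forall>c\<in>Ce K e. norm c \<le> B" using Ce_bdd[OF assms] by blast
  have "c \<bullet> w \<le> B * norm w" if "c \<in> Ce K e" for c
  proof -
    have "c \<bullet> w \<le> norm c * norm w" by (rule order_trans[OF abs_ge_self Cauchy_Schwarz_ineq2])
    also have "\<dots> \<le> B * norm w" using B that by (simp add: mult_right_mono)
    finally show ?thesis .
  qed
  then show ?thesis by (intro bdd_aboveI2[where M="B * norm w"]) blast
qed

lemma Ce_pos: assumes "\<mu> \<in> interior K" "e \<in> interior K" shows "\<exists>m>0. \<forall>c\<in>Ce K e. m \<le> c \<bullet> \<mu>"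
proof -
  obtain r where r: "r > 0" "\<forall>c\<in>dual_cone K. r * norm c \<le> c \<bullet> \<mu>" using dual_int[OF assms(1)] by blast
  have "e \<noteq> 0 \<or> True" by simp
  have "r / (norm e + 1) \<le> c \<bullet> \<mu>" if c: "c \<in> Ce K e" for c
  proof -
    have "1 = c \<bullet> e" using c unfolding Ce_def by auto
    also have "\<dots> \<le> norm c * norm e" by (rule order_trans[OF abs_ge_self Cauchy_Schwarz_ineq2])
    also have "\<dots> \<le> norm c * (norm e + 1)" by (simp add: mult_left_mono)
    finally have "1 / (norm e + 1) \<le> norm c" by (simp add: field_simps add_pos_nonneg)
    then have "r * (1 / (norm e + 1)) \<le> r * norm c" using r(1) by (intro mult_left_mono) auto
    then have "r / (norm e + 1) \<le> r * norm c" by simp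
    also have "\<dots> \<le> c \<bullet> \<mu>" using r(2) c unfolding Ce_def by auto
    finally show ?thesis .
  qed
  moreover have "r / (norm e + 1) > 0" using r(1) by (intro divide_pos_pos) (auto intro: add_nonneg_pos)
  ultimately show ?thesis by blast
qed
definition phi :: "'b::euclidean_space set \<Rightarrow> 'b \<Rightarrow> ('a::euclidean_space \<Rightarrow> 'b) \<Rightarrow> 'a \<Rightarrow> real" where
  "phi K e L v = (SUP c\<in>Ce K e. c \<bullet> L v)"

lemma phi_upper: assumes "e \<in> interior K" "c \<in> Ce K e" shows "c \<bullet> L v \<le> phi K e L v"
  unfolding phi_def by (rule cSUP_upper[OF assms(2) Ce_bddA[OF assms(1)]])

lemma phi_least: assumes "proper_cone K" "e \<in> interior K" "\<And>c. c \<in> Ce K e \<Longrightarrow> c \<bullet> L v \<le> M"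
  shows "phi K e L v \<le> M"
  unfolding phi_def by (rule cSUP_least[OF Ce_ne[OF assms(1,2)]]) (use assms(3) in auto)

lemma phi_zero: assumes "proper_cone K" "e \<in> interior K" "linear L" shows "phi K e L 0 = 0"
  unfolding phi_def using Ce_ne[OF assms(1,2)] linear_0[OF assms(3)] by simp

lemma dir_obj_phi: "dir_obj K e L d = phi K e L d + 1/2 * (norm d)\<^sup>2"
  unfolding dir_obj_def phi_def by simp

lemma phi_convex: assumes "proper_cone K" "e \<in> interior K" "linear L" "0 \<le> s" "s \<le> 1"
  shows "phi K e L ((1-s) *\<^sub>R a + s *\<^sub>R b) \<le> (1-s) * phi K e L a + s * phi K e L b"
proof (rule phi_least[OF assms(1,2)])
  fix c assume c: "c \<in> Ce K e"
  have "c \<bullet> L ((1-s) *\<^sub>R a + s *\<^sub>R b) = (1-s) * (c \<bullet> L a) + s * (c \<bullet> L b)"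
    using assms(3) by (simp add: linear_add linear_cmul inner_add_right)
  also have "\<dots> \<le> (1-s) * phi K e L a + s * phi K e L b"
    using phi_upper[OF assms(2) c] assms(4,5) by (intro add_mono mult_left_mono) auto
  finally show "c \<bullet> L ((1-s) *\<^sub>R a + s *\<^sub>R b) \<le> (1-s) * phi K e L a + s * phi K e L b" .
qed

lemma phi_hom: assumes "proper_cone K" "e \<in> interior K" "linear L" "0 \<le> s"
  shows "phi K e L (s *\<^sub>R a) \<le> s * phi K e L a"
proof (rule phi_least[OF assms(1,2)])
  fix c assume c: "c \<in> Ce K e"
  have "c \<bullet> L (s *\<^sub>R a) = s * (c \<bullet> L a)"
    using assms(3) by (simp add: linear_cmul)
  also have "\<dots> \<le> s * phi K e L a"
    using phi_upper[OF assms(2) c] assms(4) by (intro mult_left_mono) auto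
  finally show "c \<bullet> L (s *\<^sub>R a) \<le> s * phi K e L a" .
qed

lemma var_ineq: assumes "proper_cone K" "e \<in> interior K" "linear L"
  and opt: "\<forall>d'. dir_obj K e L d \<le> dir_obj K e L d'"
  shows "0 \<le> phi K e L v - phi K e L d + d \<bullet> (v - d)"
proof (rule ccontr)
  assume na: "\<not> ?thesis"
  define \<delta> where "\<delta> = - (phi K e L v - phi K e L d + d \<bullet> (v - d))"
  have d0: "\<delta> > 0" using na unfolding \<delta>_def by simp
  define w where "w = v - d"
  define s where "s = min 1 (\<delta> / ((norm w)\<^sup>2 + 1))"
  have n1: "(norm w)\<^sup>2 + 1 > 0" by (simp add: add_nonneg_pos)
  have s0: "0 < s" unfolding s_def using d0 n1 by simp
  have s1: "s \<le> 1" unfolding s_def by simp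
  have "s \<le> \<delta> / ((norm w)\<^sup>2 + 1)" unfolding s_def by simp
  then have "s * ((norm w)\<^sup>2 + 1) \<le> \<delta>" using n1 by (simp add: field_simps)
  then have sw: "s * (norm w)\<^sup>2 < \<delta>" using s0 by (simp add: algebra_simps)
  have eq: "d + s *\<^sub>R w = (1-s) *\<^sub>R d + s *\<^sub>R v" unfolding w_def by (simp add: algebra_simps)
  have "dir_obj K e L d \<le> dir_obj K e L (d + s *\<^sub>R w)" using opt by blast
  then have A: "phi K e L d + 1/2 * (norm d)\<^sup>2 \<le> phi K e L (d + s *\<^sub>R w) + 1/2 * (norm (d + s *\<^sub>R w))\<^sup>2"
    by (simp add: dir_obj_phi)
  have B: "phi K e L (d + s *\<^sub>R w) \<le> (1-s) * phi K e L d + s * phi K e L v"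
    unfolding eq by (rule phi_convex[OF assms(1,2,3)]) (use s0 s1 in auto)
  have C: "(norm (d + s *\<^sub>R w))\<^sup>2 = (norm d)\<^sup>2 + 2 * s * (d \<bullet> w) + s * (s * (norm w)\<^sup>2)"
  proof -
    have "(d + s *\<^sub>R w) \<bullet> (d + s *\<^sub>R w) = d \<bullet> d + s * (d \<bullet> w) + s * (w \<bullet> d) + s * (s * (w \<bullet> w))"
      by (simp add: inner_add_left inner_add_right distrib_left)
    then show ?thesis unfolding power2_norm_eq_inner by (simp add: inner_commute[of w d])
  qed
  have D: "phi K e L v - phi K e L d + d \<bullet> w = - \<delta>" unfolding \<delta>_def w_def by simp
  have E: "(1-s) * phi K e L d = phi K e L d - s * phi K e L d" by (simp add: algebra_simps)
  have "0 \<le> s * (phi K e L v - phi K e L d + d \<bullet> w) + s * (s * (norm w)\<^sup>2) / 2"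
  proof -
    have F: "s * (phi K e L v - phi K e L d + d \<bullet> w) = s * phi K e L v - s * phi K e L d + s * (d \<bullet> w)"
      by (simp add: algebra_simps)
    show ?thesis unfolding F using A B C E by linarith
  qed
  then have "s * \<delta> \<le> s * (s * (norm w)\<^sup>2) / 2" unfolding D by simp
  moreover have "s * (s * (norm w)\<^sup>2) < s * \<delta>" using sw s0 by simp
  ultimately show False using s0 d0 using mult_pos_pos[OF s0 d0] by linarith
qed

lemma phi_d_nonneg: assumes "proper_cone K" "e \<in> interior K" "linear L"
  and opt: "\<forall>d'. dir_obj K e L d \<le> dir_obj K e L d'"
  shows "0 \<le> phi K e L d + (norm d)\<^sup>2"
proof -
  have "0 \<le> phi K e L (2 *\<^sub>R d) - phi K e L d + d \<bullet> (2 *\<^sub>R d - d)" by (rule var_ineq[OF assms])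
  moreover have "phi K e L (2 *\<^sub>R d) \<le> 2 * phi K e L d" by (rule phi_hom[OF assms(1,2,3)]) simp
  moreover have "d \<bullet> (2 *\<^sub>R d - d) = (norm d)\<^sup>2" by (simp add: power2_norm_eq_inner algebra_simps)
  ultimately show ?thesis by linarith
qed

lemma dir_nonpos: assumes "proper_cone K" "e \<in> interior K" "linear L"
  and opt: "\<forall>d'. dir_obj K e L d \<le> dir_obj K e L d'"
  shows "phi K e L d + 1/2 * (norm d)\<^sup>2 \<le> 0"
  using opt[rule_format, of 0] phi_zero[OF assms(1,2,3)] by (simp add: dir_obj_phi)

lemma armijo_suff:
  assumes pc: "proper_cone K" and eint: "e \<in> interior K" and smooth: "K_smooth K F J l"
    and lin: "linear (J z)" and s0: "0 < s" and sL: "s * (SUP c\<in>Ce K e. c \<bullet> l) \<le> 1"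
  shows "K_le K (F (z + s *\<^sub>R d) - F z) (s *\<^sub>R (J z d + (1/2 * (norm d)\<^sup>2) *\<^sub>R e))"
proof -
  have A: "J z (s *\<^sub>R d) + (1/2 * (norm (s *\<^sub>R d))\<^sup>2) *\<^sub>R l - (F (z + s *\<^sub>R d) - F z) \<in> K"
    using smooth unfolding K_smooth_def K_le_def
    by (metis add_diff_cancel_left')
  have "e - s *\<^sub>R l \<in> K"
  proof (rule bipolar[OF pc eint])
    fix c assume c: "c \<in> Ce K e"
    have "c \<bullet> l \<le> (SUP c\<in>Ce K e. c \<bullet> l)" by (rule cSUP_upper[OF c Ce_bddA[OF eint]])
    then have "s * (c \<bullet> l) \<le> 1" using sL s0 by (smt (verit) mult_left_mono)
    then show "0 \<le> c \<bullet> (e - s *\<^sub>R l)" using c unfolding Ce_def by (simp add: inner_diff_right)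
  qed
  then have B: "(s * (norm d)\<^sup>2 / 2) *\<^sub>R (e - s *\<^sub>R l) \<in> K" using s0 by (intro pc_scale[OF pc]) auto
  have eq: "s *\<^sub>R (J z d + (1/2 * (norm d)\<^sup>2) *\<^sub>R e) - (F (z + s *\<^sub>R d) - F z) =
     (J z (s *\<^sub>R d) + (1/2 * (norm (s *\<^sub>R d))\<^sup>2) *\<^sub>R l - (F (z + s *\<^sub>R d) - F z))
     + (s * (norm d)\<^sup>2 / 2) *\<^sub>R (e - s *\<^sub>R l)"
    using s0 lin by (simp add: linear_cmul power_mult_distrib scaleR_add_right scaleR_diff_right power2_eq_square algebra_simps)
  show ?thesis unfolding K_le_def eq by (rule pc_add[OF pc A B])
qed

lemma key:
  assumes pc: "proper_cone K" and eint: "e \<in> interior K" and sconv: "strongly_K_convex K F J \<mu>"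
    and lin: "linear (J z)" and opt: "\<forall>d'. dir_obj K e (J z) d \<le> dir_obj K e (J z) d'"
    and t0: "0 < t" and t1: "t \<le> 1" and tm: "tmin \<le> t"
    and mu0: "0 \<le> mumin" and mu: "\<And>c. c \<in> Ce K e \<Longrightarrow> mumin \<le> c \<bullet> \<mu>"
    and arm: "K_le K (F (z + t *\<^sub>R d) - F z) (t *\<^sub>R (J z d + (1/2 * (norm d)\<^sup>2) *\<^sub>R e))"
    and y: "K_le K (F y) (F (z + t *\<^sub>R d))"
  shows "(norm (z + t *\<^sub>R d - y))\<^sup>2 \<le> (1 - tmin * mumin) * (norm (z - y))\<^sup>2"
proof -
  let ?P = "phi K e (J z)"
  define D where "D = (norm (z - y))\<^sup>2"
  have D0: "0 \<le> D" unfolding D_def by simp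
  have V: "0 \<le> ?P (y - z) - ?P d + d \<bullet> ((y - z) - d)" by (rule var_ineq[OF pc eint lin opt])
  have N: "0 \<le> ?P d + (norm d)\<^sup>2" by (rule phi_d_nonneg[OF pc eint lin opt])
  have U: "?P (y - z) \<le> t * ?P d + t/2 * (norm d)\<^sup>2 - 1/2 * mumin * D"
  proof (rule phi_least[OF pc eint])
    fix c assume c: "c \<in> Ce K e"
    have cd: "\<And>w. w \<in> K \<Longrightarrow> 0 \<le> c \<bullet> w" using c unfolding Ce_def dual_cone_def by auto
    have ce: "c \<bullet> e = 1" using c unfolding Ce_def by auto
    have "norm (y - z) = norm (z - y)" by (rule norm_minus_commute)
    then have "0 \<le> c \<bullet> (F y - F z - (J z (y - z) + (1/2 * D) *\<^sub>R \<mu>))"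
      using sconv unfolding strongly_K_convex_def K_le_def D_def by (metis cd)
    then have s1: "c \<bullet> J z (y - z) + 1/2 * D * (c \<bullet> \<mu>) \<le> c \<bullet> F y - c \<bullet> F z"
      by (simp add: inner_diff_right inner_add_right)
    have "0 \<le> c \<bullet> (F (z + t *\<^sub>R d) - F y)" using y cd unfolding K_le_def by blast
    then have s2: "c \<bullet> F y \<le> c \<bullet> F (z + t *\<^sub>R d)" by (simp add: inner_diff_right)
    have "0 \<le> c \<bullet> (t *\<^sub>R (J z d + (1/2 * (norm d)\<^sup>2) *\<^sub>R e) - (F (z + t *\<^sub>R d) - F z))"
      using arm cd unfolding K_le_def by blast
    then have s3: "c \<bullet> F (z + t *\<^sub>R d) - c \<bullet> F z \<le> t * (c \<bullet> J z d) + t / 2 * (norm d)\<^sup>2"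
      using ce by (simp add: inner_diff_right inner_add_right algebra_simps)
    have s4: "t * (c \<bullet> J z d) \<le> t * ?P d" using phi_upper[OF eint c] t0 by (intro mult_left_mono) auto
    have s5: "1/2 * mumin * D \<le> 1/2 * D * (c \<bullet> \<mu>)" using mu[OF c] D0 by (simp add: mult_left_mono mult.commute)
    show "c \<bullet> J z (y - z) \<le> t * ?P d + t/2 * (norm d)\<^sup>2 - 1/2 * mumin * D"
      using s1 s2 s3 s4 s5 by linarith
  qed
  define X where "X = d \<bullet> (z - y)"
  have dd: "d \<bullet> ((y - z) - d) = - X - (norm d)\<^sup>2"
    unfolding X_def by (simp add: inner_diff_right power2_norm_eq_inner)
  have Xb: "X \<le> (t - 1) * ?P d + (t/2 - 1) * (norm d)\<^sup>2 - 1/2 * mumin * D"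
    using V U dd by (simp add: algebra_simps)
  have exp: "(norm (z + t *\<^sub>R d - y))\<^sup>2 = D + 2 * t * X + t * t * (norm d)\<^sup>2"
  proof -
    have e1: "z + t *\<^sub>R d - y = (z - y) + t *\<^sub>R d" by (simp add: algebra_simps)
    have "((z - y) + t *\<^sub>R d) \<bullet> ((z - y) + t *\<^sub>R d) = (z - y) \<bullet> (z - y) + t * (d \<bullet> (z - y)) + t * ((z - y) \<bullet> d) + t * (t * (d \<bullet> d))"
      by (simp add: inner_add_left inner_add_right distrib_left)
    then show ?thesis unfolding e1 D_def X_def power2_norm_eq_inner by (simp add: inner_commute[of "z - y" d])
  qed
  have m1: "2 * t * X \<le> 2 * t * ((t - 1) * ?P d + (t/2 - 1) * (norm d)\<^sup>2 - 1/2 * mumin * D)"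
    using Xb t0 by (intro mult_left_mono) auto
  have m2: "t * (t - 1) * (?P d + (norm d)\<^sup>2) \<le> 0"
    using t0 t1 N by (intro mult_nonpos_nonneg mult_nonneg_nonpos) auto
  have m3: "tmin * mumin * D \<le> t * mumin * D"
    using tm mu0 D0 by (intro mult_right_mono) auto
  have "2 * t * ((t - 1) * ?P d + (t/2 - 1) * (norm d)\<^sup>2 - 1/2 * mumin * D) + t * t * (norm d)\<^sup>2
        = 2 * (t * (t - 1) * (?P d + (norm d)\<^sup>2)) - t * mumin * D"
    by (simp add: algebra_simps)
  then have "(norm (z + t *\<^sub>R d - y))\<^sup>2 \<le> D - tmin * mumin * D"
    unfolding exp using m1 m2 m3 by linarith
  then show ?thesis unfolding D_def by (simp add: algebra_simps)
qed

lemma K_le_trans: assumes "proper_cone K" "K_le K a b" "K_le K b c" shows "K_le K a c"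
proof -
  have "(c - b) + (b - a) \<in> K" using pc_add[OF assms(1)] assms(2,3) unfolding K_le_def by blast
  then show ?thesis unfolding K_le_def by simp
qed

theorem lemma5p1:
  fixes K :: "'b::euclidean_space set"
    and F :: "'a::euclidean_space \<Rightarrow> 'b"
    and J :: "'a \<Rightarrow> 'a \<Rightarrow> 'b"
    and l \<mu> e :: 'b
    and \<gamma> :: real
    and x d :: "nat \<Rightarrow> 'a"
  assumes K: "proper_cone K"
    and deriv: "\<And>z. (F has_derivative J z) (at z)"
    and smooth: "K_smooth K F J l" and l_int: "l \<in> interior K"
    and sconv: "strongly_K_convex K F J \<mu>" and mu_int: "\<mu> \<in> interior K"
    and e_int: "e \<in> interior K"
    and gamma: "0 < \<gamma>" "\<gamma> < 1"
    and dir: "\<And>k. \<forall>d'. dir_obj K e (J (x k)) (d k) \<le> dir_obj K e (J (x k)) d'"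
    and nonterm: "\<And>k. d k \<noteq> 0"
    and step: "\<And>k. x (Suc k) = x k +
                 (\<gamma> ^ (LEAST j. armijo_ok K e F (J (x k)) \<gamma> (x k) (d k) j)) *\<^sub>R d k"
  shows "\<exists>xs. x \<longlonglongrightarrow> xs \<and> K_efficient K F xs \<and>
           (let Lmax = (SUP c\<in>Ce K e. c \<bullet> l);
                tmin = min (\<gamma> / Lmax) 1;
                mumin = (INF c\<in>Ce K e. c \<bullet> \<mu>)
            in \<forall>k. norm (x (Suc k) - xs) \<le> sqrt (1 - tmin * mumin) * norm (x k - xs))"
proof -
  define Lmax where "Lmax = (SUP c\<in>Ce K e. c \<bullet> l)"
  define tmin where "tmin = min (\<gamma> / Lmax) 1"
  define mumin where "mumin = (INF c\<in>Ce K e. c \<bullet> \<mu>)"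
  have lin: "\<And>z. linear (J z)" using deriv has_derivative_linear by blast
  have Cne: "Ce K e \<noteq> {}" by (rule Ce_ne[OF K e_int])
  have intK: "interior K \<subseteq> K" by (rule interior_subset)
  have cmu0: "\<And>c. c \<in> Ce K e \<Longrightarrow> 0 \<le> c \<bullet> \<mu>"
    using mu_int intK unfolding Ce_def dual_cone_def by auto
  have mu_low: "\<And>c. c \<in> Ce K e \<Longrightarrow> mumin \<le> c \<bullet> \<mu>"
    unfolding mumin_def by (rule cINF_lower) (use cmu0 in \<open>auto intro!: bdd_belowI2[where m=0]\<close>)
  obtain m0 where m0: "m0 > 0" "\<forall>c\<in>Ce K e. m0 \<le> c \<bullet> \<mu>" using Ce_pos[OF mu_int e_int] by blast
  have mupos: "0 < mumin"
  proof -
    have "m0 \<le> mumin" unfolding mumin_def by (rule cINF_greatest[OF Cne]) (use m0 in auto)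
    then show ?thesis using m0 by simp
  qed
  obtain c0 where c0: "c0 \<in> Ce K e" using Cne by blast
  have l_up: "\<And>c. c \<in> Ce K e \<Longrightarrow> c \<bullet> l \<le> Lmax"
    unfolding Lmax_def by (rule cSUP_upper[OF _ Ce_bddA[OF e_int]])
  have lmu: "l - \<mu> \<in> K"
  proof -
    obtain v :: 'a where v: "v \<in> Basis" using nonempty_Basis by blast
    then have v0: "v \<noteq> 0" by auto
    define h where "h = 1/2 * (norm v)\<^sup>2"
    have h0: "h > 0" unfolding h_def using v0 by simp
    have a1: "F v - F 0 - (J 0 v + h *\<^sub>R \<mu>) \<in> K"
      using sconv unfolding strongly_K_convex_def K_le_def h_def by (metis diff_zero)
    have a2: "J 0 v + h *\<^sub>R l - (F v - F 0) \<in> K"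
      using smooth unfolding K_smooth_def K_le_def h_def by (metis diff_zero)
    have "(F v - F 0 - (J 0 v + h *\<^sub>R \<mu>)) + (J 0 v + h *\<^sub>R l - (F v - F 0)) \<in> K"
      by (rule pc_add[OF K a1 a2])
    then have hk: "h *\<^sub>R (l - \<mu>) \<in> K" by (simp add: algebra_simps)
    have "(1/h) *\<^sub>R (h *\<^sub>R (l - \<mu>)) \<in> K" by (rule pc_scale[OF K hk]) (use h0 in simp)
    moreover have "(1/h) *\<^sub>R (h *\<^sub>R (l - \<mu>)) = l - \<mu>" using h0 by simp
    ultimately show ?thesis by simp
  qed
  have c0d: "c0 \<in> dual_cone K" and c0e: "c0 \<bullet> e = 1" using c0 unfolding Ce_def by auto
  have "0 \<le> c0 \<bullet> (l - \<mu>)" using c0d lmu unfolding dual_cone_def by auto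
  then have mu_le_L: "mumin \<le> Lmax" using mu_low[OF c0] l_up[OF c0] by (simp add: inner_diff_right)
  have Lpos: "0 < Lmax" using mupos mu_le_L by simp
  have tmin0: "0 < tmin" unfolding tmin_def using gamma Lpos by simp
  have tmin1: "tmin \<le> 1" unfolding tmin_def by simp
  have "tmin * mumin \<le> (\<gamma> / Lmax) * Lmax"
    unfolding tmin_def using mu_le_L mupos Lpos gamma by (intro mult_mono) auto
  then have tmg: "tmin * mumin \<le> \<gamma>" using Lpos by simp
  define q where "q = 1 - tmin * mumin"
  have q0: "0 \<le> q" unfolding q_def using tmg gamma by simp
  have q1: "q < 1" unfolding q_def using tmin0 mupos by simp
  define s where "s = sqrt q"
  have s0: "0 \<le> s" unfolding s_def using q0 by simp
  have s1: "s < 1" unfolding s_def using q1 q0 by simp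
  define jj where "jj k = (LEAST j. armijo_ok K e F (J (x k)) \<gamma> (x k) (d k) j)" for k
  define t where "t k = \<gamma> ^ jj k" for k
  have step': "\<And>k. x (Suc k) = x k + t k *\<^sub>R d k" unfolding t_def jj_def using step by simp
  have arm_suff: "\<And>k j. \<gamma> ^ j * Lmax \<le> 1 \<Longrightarrow> armijo_ok K e F (J (x k)) \<gamma> (x k) (d k) j"
    unfolding armijo_ok_def
    by (rule armijo_suff[OF K e_int smooth lin]) (use gamma in \<open>auto simp: Lmax_def mult.commute\<close>)
  have ex_arm: "\<And>k. \<exists>j. armijo_ok K e F (J (x k)) \<gamma> (x k) (d k) j"
  proof -
    fix k
    obtain n where "\<gamma> ^ n < 1 / Lmax" using real_arch_pow_inv[of "1/Lmax" \<gamma>] Lpos gamma by auto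
    then have "\<gamma> ^ n * Lmax \<le> 1" using Lpos by (simp add: field_simps)
    then show "\<exists>j. armijo_ok K e F (J (x k)) \<gamma> (x k) (d k) j" using arm_suff by blast
  qed
  have arm: "\<And>k. K_le K (F (x k + t k *\<^sub>R d k) - F (x k)) (t k *\<^sub>R (J (x k) (d k) + (1/2 * (norm (d k))\<^sup>2) *\<^sub>R e))"
    unfolding t_def jj_def using LeastI_ex[OF ex_arm] unfolding armijo_ok_def by blast
  have t0: "\<And>k. 0 < t k" unfolding t_def using gamma by simp
  have t1: "\<And>k. t k \<le> 1" unfolding t_def using gamma by (simp add: power_le_one)
  have tm: "\<And>k. tmin \<le> t k"
  proof -
    fix k
    show "tmin \<le> t k"
    proof (cases "jj k")
      case 0 then show ?thesis unfolding t_def using tmin1 by simp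
    next
      case (Suc i)
      have "i < jj k" using Suc by simp
      then have "\<not> armijo_ok K e F (J (x k)) \<gamma> (x k) (d k) i" unfolding jj_def by (rule not_less_Least)
      then have "1 < \<gamma> ^ i * Lmax" using arm_suff by force
      then have "\<gamma> / Lmax < \<gamma> * \<gamma> ^ i" using Lpos gamma by (simp add: field_simps)
      then show ?thesis unfolding t_def tmin_def using Suc by simp
    qed
  qed
  have keyk: "\<And>k y. K_le K (F y) (F (x (Suc k))) \<Longrightarrow> norm (x (Suc k) - y) \<le> s * norm (x k - y)"
  proof -
    fix k y assume y: "K_le K (F y) (F (x (Suc k)))"
    have "(norm (x k + t k *\<^sub>R d k - y))\<^sup>2 \<le> (1 - tmin * mumin) * (norm (x k - y))\<^sup>2"
      by (rule key[OF K e_int sconv lin dir t0 t1 tm _ mu_low arm]) (use mupos y step' in auto)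
    then have "(norm (x (Suc k) - y))\<^sup>2 \<le> q * (norm (x k - y))\<^sup>2" unfolding q_def step' .
    then have "sqrt ((norm (x (Suc k) - y))\<^sup>2) \<le> sqrt (q * (norm (x k - y))\<^sup>2)" by (rule real_sqrt_le_mono)
    then show "norm (x (Suc k) - y) \<le> s * norm (x k - y)" unfolding s_def by (simp add: real_sqrt_mult)
  qed
  have mono1: "\<And>k. K_le K (F (x (Suc k))) (F (x k))"
  proof -
    fix k
    have "- (J (x k) (d k) + (1/2 * (norm (d k))\<^sup>2) *\<^sub>R e) \<in> K"
    proof (rule bipolar[OF K e_int])
      fix c assume c: "c \<in> Ce K e"
      have "c \<bullet> J (x k) (d k) \<le> phi K e (J (x k)) (d k)" by (rule phi_upper[OF e_int c])
      moreover have "phi K e (J (x k)) (d k) + 1/2 * (norm (d k))\<^sup>2 \<le> 0" by (rule dir_nonpos[OF K e_int lin dir])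
      moreover have "c \<bullet> e = 1" using c unfolding Ce_def by auto
      ultimately show "0 \<le> c \<bullet> - (J (x k) (d k) + (1/2 * (norm (d k))\<^sup>2) *\<^sub>R e)"
        by (simp add: inner_add_right inner_diff_right)
    qed
    then have A: "t k *\<^sub>R (- (J (x k) (d k) + (1/2 * (norm (d k))\<^sup>2) *\<^sub>R e)) \<in> K"
      using t0 by (intro pc_scale[OF K]) (auto simp: less_imp_le)
    have B: "t k *\<^sub>R (J (x k) (d k) + (1/2 * (norm (d k))\<^sup>2) *\<^sub>R e) - (F (x (Suc k)) - F (x k)) \<in> K"
      using arm[of k] unfolding K_le_def step'[symmetric] .
    have "t k *\<^sub>R (- (J (x k) (d k) + (1/2 * (norm (d k))\<^sup>2) *\<^sub>R e)) +
        (t k *\<^sub>R (J (x k) (d k) + (1/2 * (norm (d k))\<^sup>2) *\<^sub>R e) - (F (x (Suc k)) - F (x k))) \<in> K"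
      by (rule pc_add[OF K A B])
    moreover have "\<And>(a::'b) (b::'b) (r::real). r *\<^sub>R (- a) + (r *\<^sub>R a - b) = - b"
      by (simp add: scaleR_minus_right)
    ultimately have "- (F (x (Suc k)) - F (x k)) \<in> K" by metis
    then show "K_le K (F (x (Suc k))) (F (x k))" unfolding K_le_def by simp
  qed
  have Krefl: "\<And>a. K_le K a a" unfolding K_le_def using pc_zero[OF K] by simp
  have mono: "\<And>k m. k \<le> m \<Longrightarrow> K_le K (F (x m)) (F (x k))"
  proof -
    fix k m :: nat assume "k \<le> m"
    then show "K_le K (F (x m)) (F (x k))"
    proof (induction m rule: dec_induct)
      case base then show ?case by (rule Krefl)
    next
      case (step m) then show ?case using K_le_trans[OF K mono1[of m]] by blast
    qed
  qed
  have iter: "\<And>y n k. (\<forall>j\<le>n. K_le K (F y) (F (x j))) \<Longrightarrow> k \<le> n \<Longrightarrow> norm (x k - y) \<le> s ^ k * norm (x 0 - y)"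
  proof -
    fix y n k assume G: "\<forall>j\<le>n. K_le K (F y) (F (x j))"
    show "k \<le> n \<Longrightarrow> norm (x k - y) \<le> s ^ k * norm (x 0 - y)"
    proof (induction k)
      case 0 then show ?case by simp
    next
      case (Suc k)
      have "norm (x (Suc k) - y) \<le> s * norm (x k - y)" using G Suc.prems by (intro keyk) auto
      also have "\<dots> \<le> s * (s ^ k * norm (x 0 - y))" using Suc s0 by (intro mult_left_mono) auto
      finally show ?case by simp
    qed
  qed
  define R where "R = norm (x 0 - x 1) / (1 - s)"
  have R0: "0 \<le> R" unfolding R_def using s1 by simp
  have bndR: "\<And>m. norm (x 0 - x m) \<le> R"
  proof -
    fix m
    show "norm (x 0 - x m) \<le> R"
    proof (cases m)
      case 0 then show ?thesis using R0 by simp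
    next
      case (Suc i)
      have "norm (x 1 - x m) \<le> s * norm (x 0 - x m)" using keyk[where k=0 and y="x m"] mono[of 1 m] Suc by simp
      moreover have "norm (x 0 - x m) \<le> norm (x 0 - x 1) + norm (x 1 - x m)" by (rule norm_diff_triangle_le[where y="x 1"]) simp_all
      ultimately have "(1 - s) * norm (x 0 - x m) \<le> norm (x 0 - x 1)" by (simp add: algebra_simps)
      then show ?thesis unfolding R_def using s1 by (simp add: field_simps)
    qed
  qed
  have cauchy_bnd: "\<And>k m. k \<le> m \<Longrightarrow> norm (x k - x m) \<le> s ^ k * R"
  proof -
    fix k m :: nat assume km: "k \<le> m"
    have "norm (x k - x m) \<le> s ^ k * norm (x 0 - x m)" using mono km by (intro iter[of m]) auto
    also have "\<dots> \<le> s ^ k * R" using bndR s0 by (intro mult_left_mono) auto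
    finally show "norm (x k - x m) \<le> s ^ k * R" .
  qed
  have spow: "(\<lambda>k. s ^ k) \<longlonglongrightarrow> 0" using s0 s1 by (intro LIMSEQ_power_zero) simp
  have cx: "Cauchy x"
  proof (rule metric_CauchyI)
    fix \<epsilon> :: real assume ep: "0 < \<epsilon>"
    have "(\<lambda>k. s ^ k * (R + 1)) \<longlonglongrightarrow> 0" using spow by (rule tendsto_mult_left_zero)
    then obtain M where M: "\<forall>k\<ge>M. norm (s ^ k * (R + 1)) < \<epsilon>" using ep unfolding LIMSEQ_def by fastforce
    have "\<forall>m\<ge>M. \<forall>n\<ge>M. dist (x m) (x n) < \<epsilon>"
    proof (intro allI impI)
      fix m n assume mM: "m \<ge> M" and nM: "n \<ge> M"
      have aux: "\<And>a b. M \<le> a \<Longrightarrow> a \<le> b \<Longrightarrow> norm (x a - x b) < \<epsilon>"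
      proof -
        fix a b assume "M \<le> a" "a \<le> b"
        have "norm (x a - x b) \<le> s ^ a * R" using cauchy_bnd \<open>a \<le> b\<close> .
        also have "\<dots> \<le> s ^ a * (R + 1)" using s0 by (intro mult_left_mono) auto
        also have "\<dots> < \<epsilon>" using M \<open>M \<le> a\<close> s0 R0 by auto
        finally show "norm (x a - x b) < \<epsilon>" .
      qed
      show "dist (x m) (x n) < \<epsilon>"
      proof (cases "m \<le> n")
        case True then show ?thesis using aux mM by (simp add: dist_norm)
      next
        case False
        then have "norm (x n - x m) < \<epsilon>" using aux[of n m] nM by simp
        moreover have "norm (x m - x n) = norm (x n - x m)" by (rule norm_minus_commute)
        ultimately show ?thesis unfolding dist_norm by simp
      qed
    qed
    then show "\<exists>M. \<forall>m\<ge>M. \<forall>n\<ge>M. dist (x m) (x n) < \<epsilon>" by blast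
  qed
  obtain xs where lim: "x \<longlonglongrightarrow> xs" using Cauchy_convergent[OF cx] unfolding convergent_def by blast
  have Fcont: "isCont F z" for z using has_derivative_continuous[OF deriv[of z]] by simp
  have Flim: "(\<lambda>k. F (x k)) \<longlonglongrightarrow> F xs" by (rule isCont_tendsto_compose[OF Fcont lim])
  have clK: "closed K" using K unfolding proper_cone_def by auto
  have Gxs: "\<And>k. K_le K (F xs) (F (x k))"
  proof -
    fix k
    have "(\<lambda>m. F (x k) - F (x m)) \<longlonglongrightarrow> F (x k) - F xs" by (intro tendsto_diff tendsto_const Flim)
    moreover have "\<forall>\<^sub>F m in sequentially. F (x k) - F (x m) \<in> K"
      unfolding eventually_sequentially by (intro exI[of _ k]) (use mono in \<open>auto simp: K_le_def\<close>)
    ultimately have "F (x k) - F xs \<in> K" using clK Lim_in_closed_set[of K "\<lambda>m. F (x k) - F (x m)" sequentially] by simp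
    then show "K_le K (F xs) (F (x k))" unfolding K_le_def .
  qed
  have rate: "\<forall>k. norm (x (Suc k) - xs) \<le> sqrt (1 - tmin * mumin) * norm (x k - xs)"
  proof
    fix k show "norm (x (Suc k) - xs) \<le> sqrt (1 - tmin * mumin) * norm (x k - xs)"
      using keyk[OF Gxs[of "Suc k"]] unfolding s_def q_def .
  qed
  have eff: "K_efficient K F xs"
    unfolding K_efficient_def
  proof
    assume "\<exists>y. K_le K (F y) (F xs) \<and> F y \<noteq> F xs"
    then obtain y where y: "K_le K (F y) (F xs)" "F y \<noteq> F xs" by blast
    have Gy: "\<And>k. K_le K (F y) (F (x k))" using K_le_trans[OF K y(1) Gxs] .
    have bnd: "norm (x k - y) \<le> s ^ k * norm (x 0 - y)" for k by (rule iter[where y=y and n=k and k=k]) (use Gy in auto)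
    have "(\<lambda>k. s ^ k * norm (x 0 - y)) \<longlonglongrightarrow> 0" using spow by (rule tendsto_mult_left_zero)
    moreover have "\<forall>\<^sub>F k in sequentially. norm (x k - y) \<le> s ^ k * norm (x 0 - y)"
      by (intro always_eventually allI bnd)
    ultimately have "(\<lambda>k. x k - y) \<longlonglongrightarrow> 0" by (rule Lim_null_comparison[rotated])
    then have "x \<longlonglongrightarrow> y" by (simp add: LIM_zero_iff)
    then have "y = xs" using LIMSEQ_unique[OF lim] by blast
    then show False using y(2) by simp
  qed
  show ?thesis
    apply (rule exI[of _ xs])
    using lim eff rate by (simp add: Let_def Lmax_def tmin_def mumin_def)
qed

end
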